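(* If $G$ is a connected graph, then $F_c(G)\ge b(G)+1$, and this bound is sharp.
   Context: Forcing process: given a set of initially colored vertices, at each step a colored vertex with exactly one non-colored neighbor forces (colors) that neighbor. A set $S\subseteq V(G)$ is a forcing set if iterating this process from $S$ eventually colors all vertices; it is a connected forcing set if moreover the induced subgraph $G[S]$ is connected. $F_c(G)$ is the minimum cardinality of a connected forcing set of $G$. A block of $G$ is a maximal connected subgraph with no cut vertex of its own; every block of order at least $2$ is either $2$-connected or isomorphic to $K_2$. $b(G)$ denotes the number of $2$-connected blocks of $G$ (blocks of order at least $2$ not isomorphic to $K_2$). Graphs are assumed to have no isolated vertices. *)

theory Defs
  imports Main
begin

text \<open>A finite simple graph given by a vertex set V and a set E of 2-element edges,
  with no isolated vertices (standing assumption of the paper).\<close>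
definition graph :: "'a set \<Rightarrow> 'a set set \<Rightarrow> bool" where
  "graph V E \<longleftrightarrow> finite V
     \<and> E \<subseteq> {e. \<exists>u v. e = {u, v} \<and> u \<noteq> v \<and> u \<in> V \<and> v \<in> V}
     \<and> (\<forall>v\<in>V. \<exists>e\<in>E. v \<in> e)"

definition connected_on :: "'a set set \<Rightarrow> 'a set \<Rightarrow> bool" where
  "connected_on E S \<longleftrightarrow> S \<noteq> {} \<and>
     (\<forall>u\<in>S. \<forall>v\<in>S. (\<lambda>x y. x \<in> S \<and> y \<in> S \<and> {x, y} \<in> E)\<^sup>*\<^sup>* u v)"

inductive_set forced :: "'a set set \<Rightarrow> 'a set \<Rightarrow> 'a set" for E S where
  init: "s \<in> S \<Longrightarrow> s \<in> forced E S"
| force: "\<lbrakk>u \<in> forced E S; {u, v} \<in> E;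
           \<And>w. {u, w} \<in> E \<Longrightarrow> w \<noteq> v \<Longrightarrow> w \<in> forced E S\<rbrakk> \<Longrightarrow> v \<in> forced E S"

definition forcing_set :: "'a set \<Rightarrow> 'a set set \<Rightarrow> 'a set \<Rightarrow> bool" where
  "forcing_set V E S \<longleftrightarrow> S \<subseteq> V \<and> V \<subseteq> forced E S"

definition connected_forcing_set :: "'a set \<Rightarrow> 'a set set \<Rightarrow> 'a set \<Rightarrow> bool" where
  "connected_forcing_set V E S \<longleftrightarrow> forcing_set V E S \<and> connected_on E S"

definition F_c :: "'a set \<Rightarrow> 'a set set \<Rightarrow> nat" where
  "F_c V E = Min (card ` {S. connected_forcing_set V E S})"

definition nonsep :: "'a set set \<Rightarrow> 'a set \<Rightarrow> bool" where
  "nonsep E B \<longleftrightarrow> connected_on E B \<and>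
     (\<forall>x\<in>B. B - {x} \<noteq> {} \<longrightarrow> connected_on E (B - {x}))"

text \<open>Blocks: maximal such vertex sets (a maximal subgraph without cut vertex is induced).\<close>
definition is_block :: "'a set \<Rightarrow> 'a set set \<Rightarrow> 'a set \<Rightarrow> bool" where
  "is_block V E B \<longleftrightarrow> B \<subseteq> V \<and> nonsep E B \<and> (\<forall>B'. B \<subset> B' \<and> B' \<subseteq> V \<longrightarrow> \<not> nonsep E B')"

text \<open>b(G): number of 2-connected blocks, i.e. blocks of order at least 2 not isomorphic
  to K2; in a simple graph a block of order 2 is K2, so these are the blocks of order \<ge> 3.\<close>
definition b :: "'a set \<Rightarrow> 'a set set \<Rightarrow> nat" where
  "b V E = card {B. is_block V E B \<and> card B \<ge> 3}"

end

theory Submission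
  imports Defs "HOL-Library.Transitive_Closure_Table"
begin

definition ER :: "'a set set \<Rightarrow> 'a set \<Rightarrow> 'a \<Rightarrow> 'a \<Rightarrow> bool" where
  "ER E X = (\<lambda>x y. x \<in> X \<and> y \<in> X \<and> {x,y} \<in> E)"

lemma connected_on_ER: "connected_on E S \<longleftrightarrow> S \<noteq> {} \<and> (\<forall>u\<in>S. \<forall>v\<in>S. (ER E S)\<^sup>*\<^sup>* u v)"
  unfolding connected_on_def ER_def by simp

lemma ER_sym: "ER E X x y \<Longrightarrow> ER E X y x" by (auto simp: ER_def insert_commute)

lemma ER_rtc_sym: "(ER E X)\<^sup>*\<^sup>* x y \<Longrightarrow> (ER E X)\<^sup>*\<^sup>* y x"
  by (induction rule: rtranclp_induct) (auto intro: converse_rtranclp_into_rtranclp ER_sym)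

lemma ER_mono: assumes "X \<subseteq> Y" "(ER E X)\<^sup>*\<^sup>* x y" shows "(ER E Y)\<^sup>*\<^sup>* x y"
  using assms(2) by (induction rule: rtranclp_induct) (use assms(1) in \<open>auto simp: ER_def intro: rtranclp.rtrancl_into_rtrancl\<close>)

lemma ER_rtc_mem: "(ER E X)\<^sup>*\<^sup>* x y \<Longrightarrow> x \<noteq> y \<Longrightarrow> y \<in> X"
  by (induction rule: rtranclp_induct) (auto simp: ER_def)

lemma ER_rtc_mem1: "(ER E X)\<^sup>*\<^sup>* x y \<Longrightarrow> x \<noteq> y \<Longrightarrow> x \<in> X"
  by (induction rule: converse_rtranclp_induct) (auto simp: ER_def)

lemma ER_step: "x \<in> X \<Longrightarrow> y \<in> X \<Longrightarrow> {x,y} \<in> E \<Longrightarrow> ER E X x y"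
  by (simp add: ER_def)

lemma connected_root: "r \<in> X \<Longrightarrow> (\<forall>x\<in>X. (ER E X)\<^sup>*\<^sup>* x r) \<Longrightarrow> connected_on E X"
  unfolding connected_on_ER by (meson ER_rtc_sym empty_iff rtranclp_trans)

lemma connected_union:
  assumes "connected_on E X" "connected_on E Y" "X \<inter> Y \<noteq> {}"
  shows "connected_on E (X \<union> Y)"
proof -
  obtain c where c: "c \<in> X" "c \<in> Y" using assms(3) by blast
  have "\<forall>x\<in>X \<union> Y. (ER E (X \<union> Y))\<^sup>*\<^sup>* x c"
  proof
    fix x assume "x \<in> X \<union> Y"
    then show "(ER E (X \<union> Y))\<^sup>*\<^sup>* x c"
      using assms(1,2) c unfolding connected_on_ER
      by (metis ER_mono Un_iff sup.cobounded1 sup.cobounded2)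
  qed
  then show ?thesis using c by (intro connected_root[of c]) auto
qed

lemma graph_edge: "graph V E \<Longrightarrow> {x,y} \<in> E \<Longrightarrow> x \<in> V \<and> y \<in> V \<and> x \<noteq> y"
  unfolding graph_def by (auto simp: doubleton_eq_iff)

lemma conn_neighbor:
  assumes "connected_on E X" "x \<in> X" "y \<in> X" "x \<noteq> y"
  shows "\<exists>z\<in>X. {x,z} \<in> E"
proof -
  have "(ER E X)\<^sup>*\<^sup>* x y" using assms unfolding connected_on_ER by blast
  then show ?thesis using assms(4)
    by (cases rule: converse_rtranclpE) (auto simp: ER_def)
qed

lemma card3_other: assumes "card B \<ge> 3" shows "\<exists>y\<in>B. y \<noteq> a \<and> y \<noteq> c"
proof (rule ccontr)
  assume "\<not> ?thesis"
  then have "B \<subseteq> {a,c}" by blast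
  then have "card B \<le> card {a,c}" by (simp add: card_mono)
  also have "\<dots> \<le> 2" by (simp add: card_insert_le_m1)
  finally show False using assms by simp
qed

lemma two_neighbors:
  assumes g: "graph V E" and nB: "nonsep E B" and c3: "card B \<ge> 3" and v: "v \<in> B"
  shows "\<exists>b1 b2. b1 \<in> B \<and> b2 \<in> B \<and> b1 \<noteq> b2 \<and> {v,b1} \<in> E \<and> {v,b2} \<in> E \<and> b1 \<noteq> v \<and> b2 \<noteq> v"
proof -
  have cB: "connected_on E B" using nB by (simp add: nonsep_def)
  obtain y where y: "y \<in> B" "y \<noteq> v" using card3_other[OF c3] by blast
  obtain b1 where b1: "b1 \<in> B" "{v,b1} \<in> E" using conn_neighbor[OF cB v y(1)] y by metis
  have b1v: "b1 \<noteq> v" using graph_edge[OF g b1(2)] by blast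
  have ne1: "B - {b1} \<noteq> {}" using v b1v by blast
  have nsd: "\<forall>x\<in>B. B - {x} \<noteq> {} \<longrightarrow> connected_on E (B - {x})" using nB by (simp add: nonsep_def)
  have c1: "connected_on E (B - {b1})" using nsd b1(1) ne1 by blast
  obtain y2 where y2: "y2 \<in> B" "y2 \<noteq> v" "y2 \<noteq> b1" using card3_other[OF c3] by blast
  obtain b2 where b2: "b2 \<in> B - {b1}" "{v,b2} \<in> E"
    using conn_neighbor[OF c1, of v y2] y2 v b1v by auto
  have "b2 \<noteq> v" using graph_edge[OF g b2(2)] by blast
  then show ?thesis using b1 b2 b1v by blast
qed

lemma path_reach:
  "rtrancl_path R x xs y \<Longrightarrow> R = ER E A \<Longrightarrow> \<forall>p\<in>set (x#xs). (ER E (set (x#xs)))\<^sup>*\<^sup>* p y"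
proof (induction rule: rtrancl_path.induct)
  case (base x)
  then show ?case by simp
next
  case (step x x' xs y)
  have s: "set (x'#xs) \<subseteq> set (x#x'#xs)" by auto
  have "(ER E (set (x#x'#xs)))\<^sup>*\<^sup>* x' y" using step ER_mono[OF s] by simp
  moreover have "ER E (set (x#x'#xs)) x x'" using step(1,4) by (simp add: ER_def)
  ultimately have "(ER E (set (x#x'#xs)))\<^sup>*\<^sup>* x y" by (meson converse_rtranclp_into_rtranclp)
  then show ?case using step ER_mono[OF s] by auto
qed

lemma path_set: "rtrancl_path R x xs y \<Longrightarrow> R = ER E A \<Longrightarrow> x \<in> A \<Longrightarrow> set (x#xs) \<subseteq> A"
  by (induction rule: rtrancl_path.induct) (auto simp: ER_def)

lemma path_remove:
  "rtrancl_path R x xs y \<Longrightarrow> R = ER E A \<Longrightarrow> distinct (x#xs) \<Longrightarrow>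
   \<forall>p\<in>set (x#xs) - {z}. (ER E (set (x#xs) - {z}))\<^sup>*\<^sup>* x p \<or> (ER E (set (x#xs) - {z}))\<^sup>*\<^sup>* p y"
proof (induction rule: rtrancl_path.induct)
  case (base x)
  then show ?case by simp
next
  case (step x x' xs y)
  define Q where "Q = set (x#x'#xs) - {z}"
  define Q' where "Q' = set (x'#xs) - {z}"
  have s: "Q' \<subseteq> Q" by (auto simp: Q_def Q'_def)
  have IH: "\<forall>p\<in>Q'. (ER E Q')\<^sup>*\<^sup>* x' p \<or> (ER E Q')\<^sup>*\<^sup>* p y" using step by (simp add: Q'_def)
  have "\<forall>p\<in>Q. (ER E Q)\<^sup>*\<^sup>* x p \<or> (ER E Q)\<^sup>*\<^sup>* p y"
  proof
    fix p assume p: "p \<in> Q"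
    show "(ER E Q)\<^sup>*\<^sup>* x p \<or> (ER E Q)\<^sup>*\<^sup>* p y"
    proof (cases "p = x")
      case True then show ?thesis by simp
    next
      case False
      then have pQ': "p \<in> Q'" using p by (auto simp: Q_def Q'_def)
      show ?thesis
      proof (cases "x = z")
        case True
        then have "z \<notin> set (x'#xs)" using step(5) by auto
        then have "Q' = set (x'#xs)" by (auto simp: Q'_def)
        then have "(ER E Q')\<^sup>*\<^sup>* p y" using path_reach[OF step(2) step(4)] pQ' by auto
        then show ?thesis using ER_mono[OF s] by blast
      next
        case xz: False
        show ?thesis
        proof (cases "x' = z")
          case True
          then have "x' \<notin> Q'" by (simp add: Q'_def)
          then have "\<not> (ER E Q')\<^sup>*\<^sup>* x' p" using ER_rtc_mem1 pQ' by fastforce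
          then have "(ER E Q')\<^sup>*\<^sup>* p y" using IH pQ' by blast
          then show ?thesis using ER_mono[OF s] by blast
        next
          case False
          have e: "ER E Q x x'" using step(1,4) xz False by (auto simp: ER_def Q_def)
          have "(ER E Q')\<^sup>*\<^sup>* x' p \<or> (ER E Q')\<^sup>*\<^sup>* p y" using IH pQ' by blast
          then show ?thesis
          proof
            assume "(ER E Q')\<^sup>*\<^sup>* x' p"
            then have "(ER E Q)\<^sup>*\<^sup>* x' p" using ER_mono[OF s] by blast
            then show ?thesis using e by (meson converse_rtranclp_into_rtranclp)
          next
            assume "(ER E Q')\<^sup>*\<^sup>* p y"
            then show ?thesis using ER_mono[OF s] by blast
          qed
        qed
      qed
    qed
  qed
  then show ?case by (simp add: Q_def)
qed

lemma ear:
  assumes nB: "nonsep E B" and aB: "a \<in> B" and cB: "c \<in> B" and ac: "a \<noteq> c"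
    and AB: "A \<inter> B = {}" and wA: "w \<in> A" and aw: "{a,w} \<in> E"
    and reach: "(ER E A)\<^sup>*\<^sup>* w w'" and w'c: "{w',c} \<in> E"
  shows "\<exists>B'. nonsep E B' \<and> B \<subset> B' \<and> B' \<subseteq> B \<union> A"
proof -
  obtain xs0 where "rtrancl_path (ER E A) w xs0 w'" using reach rtranclp_eq_rtrancl_path by metis
  then obtain xs where p: "rtrancl_path (ER E A) w xs w'" and d: "distinct (w#xs)"
    by (metis rtrancl_path_distinct)
  define P where "P = set (w#xs)"
  have PA: "P \<subseteq> A" using path_set[OF p refl wA] by (simp add: P_def)
  have wP: "w \<in> P" by (simp add: P_def)
  have reachP: "\<forall>p\<in>P. (ER E P)\<^sup>*\<^sup>* p w'" using path_reach[OF p refl] by (simp add: P_def)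
  have w'P: "w' \<in> P" using reachP wP ER_rtc_mem by metis
  have remP: "\<And>z. \<forall>p\<in>P-{z}. (ER E (P - {z}))\<^sup>*\<^sup>* w p \<or> (ER E (P-{z}))\<^sup>*\<^sup>* p w'"
    using path_remove[OF p refl d] by (simp add: P_def)
  define X where "X = B \<union> P"
  have cBc: "connected_on E B" using nB by (simp add: nonsep_def)
  have cBr: "\<And>x y. x \<in> B \<Longrightarrow> y \<in> B \<Longrightarrow> (ER E B)\<^sup>*\<^sup>* x y" using cBc unfolding connected_on_ER by blast
  have key: "connected_on E (X - Z)" if Z: "Z = {} \<or> (\<exists>z. Z = {z})" for Z
  proof (cases "Z \<inter> P = {}")
    case True
    have cBZ: "connected_on E (B - Z)"
    proof (cases "Z = {}")
      case True then show ?thesis using cBc by simp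
    next
      case False
      then obtain z where z: "Z = {z}" using Z by blast
      show ?thesis
      proof (cases "z \<in> B")
        case True
        have "B - {z} \<noteq> {}" using aB cB ac by blast
        then show ?thesis using nB True z unfolding nonsep_def by blast
      next
        case False then show ?thesis using z cBc by simp
      qed
    qed
    obtain t where t: "t = a \<or> t = c" "t \<notin> Z" using Z ac by blast
    have tBZ: "t \<in> B - Z" using t aB cB by blast
    have sub1: "B - Z \<subseteq> X - Z" by (auto simp: X_def)
    have sub2: "P \<subseteq> X - Z" using True by (auto simp: X_def)
    have "\<forall>x\<in>X-Z. (ER E (X-Z))\<^sup>*\<^sup>* x t"
    proof
      fix x assume x: "x \<in> X - Z"
      show "(ER E (X-Z))\<^sup>*\<^sup>* x t"
      proof (cases "x \<in> B")
        case True
        then have "(ER E (B-Z))\<^sup>*\<^sup>* x t" using cBZ tBZ x unfolding connected_on_ER by blast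
        then show ?thesis using ER_mono[OF sub1] by blast
      next
        case False
        then have xP: "x \<in> P" using x by (auto simp: X_def)
        have xw': "(ER E (X-Z))\<^sup>*\<^sup>* x w'" using reachP xP ER_mono[OF sub2] by blast
        show ?thesis
        proof (cases "t = c")
          case True
          have "ER E (X-Z) w' c" using sub2 w'P tBZ True sub1 w'c by (auto simp: ER_def)
          then show ?thesis using xw' True by (meson rtranclp.rtrancl_into_rtrancl)
        next
          case False
          then have ta: "t = a" using t by blast
          have ww': "(ER E (X-Z))\<^sup>*\<^sup>* w w'" using reachP wP ER_mono[OF sub2] by blast
          have xw: "(ER E (X-Z))\<^sup>*\<^sup>* x w" using xw' ER_rtc_sym[OF ww'] by (meson rtranclp_trans)
          have "ER E (X-Z) w a" using sub2 wP tBZ ta sub1 aw by (auto simp: ER_def insert_commute)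
          then show ?thesis using xw ta by (meson rtranclp.rtrancl_into_rtrancl)
        qed
      qed
    qed
    moreover have "t \<in> X - Z" using tBZ sub1 by blast
    ultimately show ?thesis by (intro connected_root[of t]) auto
  next
    case False
    then obtain z where Zz: "Z = {z}" "z \<in> P" using Z by blast
    have zB: "z \<notin> B" using Zz PA AB by blast
    have sub1: "B \<subseteq> X - Z" using zB Zz by (auto simp: X_def)
    have sub2: "P - {z} \<subseteq> X - Z" using Zz by (auto simp: X_def)
    have aX: "a \<in> X - Z" using aB sub1 by blast
    have "\<forall>x\<in>X-Z. (ER E (X-Z))\<^sup>*\<^sup>* x a"
    proof
      fix x assume x: "x \<in> X - Z"
      show "(ER E (X-Z))\<^sup>*\<^sup>* x a"
      proof (cases "x \<in> B")
        case True
        then show ?thesis using cBr[OF True aB] ER_mono[OF sub1] by blast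
      next
        case False
        then have xP: "x \<in> P - {z}" using x Zz by (auto simp: X_def)
        have "(ER E (P - {z}))\<^sup>*\<^sup>* w x \<or> (ER E (P-{z}))\<^sup>*\<^sup>* x w'" using remP xP by blast
        then show ?thesis
        proof
          assume h: "(ER E (P - {z}))\<^sup>*\<^sup>* w x"
          have wPz: "w \<in> P - {z}" using ER_rtc_mem1[OF h] xP by blast
          have xw: "(ER E (X-Z))\<^sup>*\<^sup>* x w" using ER_rtc_sym[OF ER_mono[OF sub2 h]] .
          have "ER E (X-Z) w a" using sub2 wPz aX aw by (auto simp: ER_def insert_commute)
          then show ?thesis using xw by (meson rtranclp.rtrancl_into_rtrancl)
        next
          assume h: "(ER E (P - {z}))\<^sup>*\<^sup>* x w'"
          have w'Pz: "w' \<in> P - {z}" using ER_rtc_mem[OF h] xP by blast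
          have xw': "(ER E (X-Z))\<^sup>*\<^sup>* x w'" using ER_mono[OF sub2 h] .
          have "ER E (X-Z) w' c" using sub2 w'Pz cB sub1 w'c by (auto simp: ER_def)
          then have "(ER E (X-Z))\<^sup>*\<^sup>* x c" using xw' by (meson rtranclp.rtrancl_into_rtrancl)
          moreover have "(ER E (X-Z))\<^sup>*\<^sup>* c a" using cBr[OF cB aB] ER_mono[OF sub1] by blast
          ultimately show ?thesis by (meson rtranclp_trans)
        qed
      qed
    qed
    then show ?thesis using aX by (intro connected_root[of a]) auto
  qed
  have "nonsep E X" unfolding nonsep_def using key[of "{}"] key by auto
  moreover have "B \<subset> X" using wP wA AB by (auto simp: X_def)
  moreover have "X \<subseteq> B \<union> A" using PA by (auto simp: X_def)
  ultimately show ?thesis by blast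
qed

lemma ear_block:
  assumes bl: "is_block V E B" and aB: "a \<in> B" and cB: "c \<in> B" and ac: "a \<noteq> c"
    and AB: "A \<inter> B = {}" and AV: "A \<subseteq> V" and wA: "w \<in> A" and aw: "{a,w} \<in> E"
    and reach: "(ER E A)\<^sup>*\<^sup>* w w'" and w'c: "{w',c} \<in> E"
  shows False
proof -
  have "nonsep E B" "B \<subseteq> V" using bl by (auto simp: is_block_def)
  from ear[OF this(1) aB cB ac AB wA aw reach w'c] obtain B' where
    "nonsep E B'" "B \<subset> B'" "B' \<subseteq> B \<union> A" by blast
  then show False using bl AV \<open>B \<subseteq> V\<close> unfolding is_block_def by blast
qed

lemma last_exit:
  "(ER E X)\<^sup>*\<^sup>* u q \<Longrightarrow> u \<in> B \<Longrightarrow> q \<notin> B \<Longrightarrow>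
   \<exists>a w. a \<in> B \<and> a \<in> X \<and> w \<in> X - B \<and> {a,w} \<in> E \<and> (ER E (X - B))\<^sup>*\<^sup>* w q"
proof (induction rule: rtranclp_induct)
  case base then show ?case by simp
next
  case (step q0 q)
  show ?case
  proof (cases "q0 \<in> B")
    case True
    then show ?thesis using step by (auto simp: ER_def)
  next
    case False
    then obtain a w where aw: "a \<in> B" "a \<in> X" "w \<in> X - B" "{a,w} \<in> E" "(ER E (X - B))\<^sup>*\<^sup>* w q0"
      using step by blast
    have "ER E (X - B) q0 q" using step(2,5) False by (auto simp: ER_def)
    then show ?thesis using aw by (meson rtranclp.rtrancl_into_rtrancl)
  qed
qed

lemma first_hit_aux:
  "(ER E X)\<^sup>*\<^sup>* s t \<Longrightarrow> s \<notin> Y \<Longrightarrow>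
   ((ER E (X - Y))\<^sup>*\<^sup>* s t \<and> t \<notin> Y) \<or> (\<exists>w' v. v \<in> Y \<and> v \<in> X \<and> (ER E (X - Y))\<^sup>*\<^sup>* s w' \<and> {w',v} \<in> E)"
proof (induction rule: rtranclp_induct)
  case base then show ?case by simp
next
  case (step t0 t)
  from step(3)[OF step(4)] show ?case
  proof
    assume h: "(ER E (X - Y))\<^sup>*\<^sup>* s t0 \<and> t0 \<notin> Y"
    show ?thesis
    proof (cases "t \<in> Y")
      case True then show ?thesis using h step(2) by (auto simp: ER_def)
    next
      case False
      have "ER E (X - Y) t0 t" using step(2) h False by (auto simp: ER_def)
      then show ?thesis using h False by (meson rtranclp.rtrancl_into_rtrancl)
    qed
  qed blast
qed

lemma first_hit:
  "(ER E X)\<^sup>*\<^sup>* s t \<Longrightarrow> s \<notin> Y \<Longrightarrow> t \<in> Y \<Longrightarrow>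
   \<exists>w' v. v \<in> Y \<and> v \<in> X \<and> (ER E (X - Y))\<^sup>*\<^sup>* s w' \<and> {w',v} \<in> E"
  using first_hit_aux by metis

lemma nonsep_union:
  assumes n1: "nonsep E B1" and n2: "nonsep E B2" and x: "x \<in> B1" "x \<in> B2" and y: "y \<in> B1" "y \<in> B2"
    and xy: "x \<noteq> y"
  shows "nonsep E (B1 \<union> B2)"
proof -
  have c1: "connected_on E B1" and c2: "connected_on E B2" using n1 n2 by (auto simp: nonsep_def)
  have rem: "connected_on E (Bi - {z})" if "nonsep E Bi" "x \<in> Bi" "y \<in> Bi" for Bi z
  proof (cases "z \<in> Bi")
    case True
    have "Bi - {z} \<noteq> {}" using that xy by blast
    then show ?thesis using that True by (auto simp: nonsep_def)
  next
    case False then show ?thesis using that by (simp add: nonsep_def)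
  qed
  have "connected_on E (B1 \<union> B2)" using connected_union[OF c1 c2] x by blast
  moreover have "connected_on E (B1 \<union> B2 - {z})" for z
  proof -
    have "B1 \<union> B2 - {z} = (B1 - {z}) \<union> (B2 - {z})" by blast
    moreover have "(B1 - {z}) \<inter> (B2 - {z}) \<noteq> {}" using x y xy by blast
    ultimately show ?thesis using connected_union[OF rem[OF n1 x(1) y(1)] rem[OF n2 x(2) y(2)]] by simp
  qed
  ultimately show ?thesis by (simp add: nonsep_def)
qed

lemma blocks_inter:
  assumes b1: "is_block V E B1" and b2: "is_block V E B2" and ne: "B1 \<noteq> B2"
    and x: "x \<in> B1" "x \<in> B2" and y: "y \<in> B1" "y \<in> B2"
  shows "x = y"
proof (rule ccontr)
  assume xy: "x \<noteq> y"
  have n: "nonsep E (B1 \<union> B2)" using nonsep_union[OF _ _ x y xy] b1 b2 by (auto simp: is_block_def)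
  have V: "B1 \<union> B2 \<subseteq> V" using b1 b2 by (auto simp: is_block_def)
  show False
  proof (cases "B2 \<subseteq> B1")
    case True
    then have "B2 \<subset> B1" using ne by blast
    then show False using b2 b1 unfolding is_block_def by blast
  next
    case False
    then have "B1 \<subset> B1 \<union> B2" by blast
    then show False using b1 n V unfolding is_block_def by blast
  qed
qed

lemma forced_in_H:
  assumes g: "graph V E" and bl: "is_block V E B" and c3: "card B \<ge> 3" and vB: "v \<in> B"
    and fs: "forcing_set V E S"
    and SH: "\<forall>s\<in>S. s = v \<or> (s \<in> V - B \<and> (\<exists>w'. (ER E (V-B))\<^sup>*\<^sup>* s w' \<and> {w',v} \<in> E))"
  shows False
proof -
  define H where "H = {v} \<union> {u. u \<in> V - B \<and> (\<exists>w'. (ER E (V-B))\<^sup>*\<^sup>* u w' \<and> {w',v} \<in> E)}"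
  have nB: "nonsep E B" and BV: "B \<subseteq> V" using bl by (auto simp: is_block_def)
  have HB: "H \<inter> B = {v}" using vB by (auto simp: H_def)
  have "x \<in> H" if "x \<in> forced E S" for x
    using that
  proof (induction rule: forced.induct)
    case (init s) then show ?case using SH by (auto simp: H_def)
  next
    case (force u y)
    note uH = force(4) and uy = force(2) and oth = force(5)
    have yV: "y \<in> V" using graph_edge[OF g uy] by blast
    show ?case
    proof (cases "u = v")
      case True
      obtain b1 b2 where bb: "b1 \<in> B" "b2 \<in> B" "b1 \<noteq> b2" "{v,b1} \<in> E" "{v,b2} \<in> E" "b1 \<noteq> v" "b2 \<noteq> v"
        using two_neighbors[OF g nB c3 vB] by blast
      obtain bb where "bb \<in> B" "bb \<noteq> v" "{v,bb} \<in> E" "bb \<noteq> y" using bb by metis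
      then have "bb \<in> H" using oth True by blast
      then show ?thesis using HB \<open>bb \<in> B\<close> \<open>bb \<noteq> v\<close> by blast
    next
      case False
      then obtain w' where u: "u \<in> V - B" "(ER E (V-B))\<^sup>*\<^sup>* u w'" "{w',v} \<in> E"
        using uH by (auto simp: H_def)
      show ?thesis
      proof (cases "y \<in> B")
        case True
        show ?thesis
        proof (cases "y = v")
          case True then show ?thesis by (simp add: H_def)
        next
          case False
          have "{y,u} \<in> E" using uy by (simp add: insert_commute)
          from ear_block[OF bl \<open>y \<in> B\<close> vB False _ _ u(1) this u(2) u(3)]
          show ?thesis by blast
        qed
      next
        case False
        have "ER E (V-B) y u" using False yV u(1) uy by (auto simp: ER_def insert_commute)
        then have "(ER E (V-B))\<^sup>*\<^sup>* y w'" using u(2) by (meson converse_rtranclp_into_rtranclp)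
        then show ?thesis using u(3) False yV by (auto simp: H_def)
      qed
    qed
  qed
  then have "V \<subseteq> H" using fs by (auto simp: forcing_set_def)
  moreover obtain y where "y \<in> B" "y \<noteq> v" using card3_other[OF c3] by blast
  ultimately show False using HB BV by blast
qed

lemma two_in_S:
  assumes g: "graph V E" and conn: "connected_on E V" and bl: "is_block V E B" and c3: "card B \<ge> 3"
    and cfs: "connected_forcing_set V E S"
  shows "\<exists>x1 x2. x1 \<in> S \<inter> B \<and> x2 \<in> S \<inter> B \<and> x1 \<noteq> x2"
proof (rule ccontr)
  assume nt: "\<not> ?thesis"
  have fs: "forcing_set V E S" and cS: "connected_on E S" using cfs by (auto simp: connected_forcing_set_def)
  have SV: "S \<subseteq> V" using fs by (simp add: forcing_set_def)
  have BV: "B \<subseteq> V" using bl by (simp add: is_block_def)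
  have Sne: "S \<noteq> {}" using cS by (simp add: connected_on_def)
  show False
  proof (cases "S \<inter> B = {}")
    case True
    obtain s0 where s0: "s0 \<in> S" using Sne by blast
    obtain bb where bb: "bb \<in> B" using card3_other[OF c3] by blast
    have "(ER E V)\<^sup>*\<^sup>* s0 bb" using conn s0 bb SV BV unfolding connected_on_ER by blast
    from first_hit[OF this, of B] s0 True bb obtain w' v where
      wv: "v \<in> B" "(ER E (V - B))\<^sup>*\<^sup>* s0 w'" "{w',v} \<in> E" by blast
    have SVB: "S \<subseteq> V - B" using SV True by blast
    have "\<forall>s\<in>S. s = v \<or> (s \<in> V - B \<and> (\<exists>w'. (ER E (V-B))\<^sup>*\<^sup>* s w' \<and> {w',v} \<in> E))"
    proof
      fix s assume s: "s \<in> S"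
      have "(ER E S)\<^sup>*\<^sup>* s s0" using cS s s0 unfolding connected_on_ER by blast
      then have "(ER E (V-B))\<^sup>*\<^sup>* s s0" using ER_mono[OF SVB] by blast
      then have "(ER E (V-B))\<^sup>*\<^sup>* s w'" using wv(2) by (meson rtranclp_trans)
      then show "s = v \<or> (s \<in> V - B \<and> (\<exists>w'. (ER E (V-B))\<^sup>*\<^sup>* s w' \<and> {w',v} \<in> E))"
        using wv(3) s SVB by blast
    qed
    then show False using forced_in_H[OF g bl c3 wv(1) fs] by blast
  next
    case False
    then obtain v where v: "v \<in> S" "v \<in> B" by blast
    have SB: "S \<inter> B = {v}" using nt v by blast
    have "\<forall>s\<in>S. s = v \<or> (s \<in> V - B \<and> (\<exists>w'. (ER E (V-B))\<^sup>*\<^sup>* s w' \<and> {w',v} \<in> E))"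
    proof
      fix s assume s: "s \<in> S"
      show "s = v \<or> (s \<in> V - B \<and> (\<exists>w'. (ER E (V-B))\<^sup>*\<^sup>* s w' \<and> {w',v} \<in> E))"
      proof (cases "s = v")
        case False
        have "(ER E S)\<^sup>*\<^sup>* s v" using cS s v unfolding connected_on_ER by blast
        from first_hit[OF this, of "{v}"] False obtain w' where
          w': "(ER E (S - {v}))\<^sup>*\<^sup>* s w'" "{w',v} \<in> E" by blast
        have sub: "S - {v} \<subseteq> V - B" using SB SV by blast
        show ?thesis using ER_mono[OF sub w'(1)] w'(2) s False SB SV by blast
      qed simp
    qed
    then show False using forced_in_H[OF g bl c3 v(2) fs] by blast
  qed
qed

lemma main_bound:
  assumes g: "graph V E" and conn: "connected_on E V" and cfs: "connected_forcing_set V E S"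
  shows "b V E + 1 \<le> card S"
proof -
  have fs: "forcing_set V E S" and cS: "connected_on E S" using cfs by (auto simp: connected_forcing_set_def)
  have SV: "S \<subseteq> V" using fs by (simp add: forcing_set_def)
  have Sne: "S \<noteq> {}" using cS by (simp add: connected_on_def)
  have finV: "finite V" using g by (simp add: graph_def)
  have finS: "finite S" using finV SV finite_subset by blast
  obtain r where r: "r \<in> S" using Sne by blast
  have rV: "r \<in> V" using r SV by blast
  define R where "R = ER E V"
  define d where "d v = (LEAST n. (R ^^ n) r v)" for v
  have dex: "\<exists>n. (R^^n) r v" if "v \<in> V" for v
    using conn that rV unfolding connected_on_ER R_def rtranclp_power by blast
  have dhold: "(R ^^ d v) r v" if "v \<in> V" for v
    unfolding d_def using dex[OF that] by (rule LeastI_ex)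
  have dle: "d v \<le> n" if "(R^^n) r v" for v n
    unfolding d_def using that by (rule Least_le)
  have d0: "d r = 0" using dle[of 0 r] by (simp add: relpowp_0_I)
  have d0r: "v = r" if "v \<in> V" "d v = 0" for v
    using dhold[OF that(1)] that(2) by (auto elim: relpowp_0_E)
  have dS: "\<exists>v'. v' \<in> V \<and> {v',v} \<in> E \<and> d v' = k" if "v \<in> V" "d v = Suc k" for v k
  proof -
    from dhold[OF that(1)] that(2) have "(R ^^ Suc k) r v" by simp
    then obtain v' where v': "(R^^k) r v'" "R v' v" by (rule relpowp_Suc_E)
    have v'V: "v' \<in> V" and e: "{v',v} \<in> E" using v'(2) by (auto simp: R_def ER_def)
    have "d v' \<le> k" using dle[OF v'(1)] .
    moreover have "(R ^^ Suc (d v')) r v" using dhold[OF v'V] v'(2) by (rule relpowp_Suc_I)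
    then have "d v \<le> Suc (d v')" by (rule dle)
    ultimately have "d v' = k" using that(2) by simp
    then show ?thesis using v'V e by blast
  qed
  have DW: "(ER E {u\<in>V. d u < m})\<^sup>*\<^sup>* v r" if "v \<in> V" "d v < m" for m v
    using that
  proof (induction "d v" arbitrary: v)
    case 0
    then show ?case using d0r by simp
  next
    case (Suc k)
    then obtain v' where v': "v' \<in> V" "{v',v} \<in> E" "d v' = k" using dS by metis
    have "(ER E {u\<in>V. d u < m})\<^sup>*\<^sup>* v' r" using Suc v' by simp
    moreover have "ER E {u\<in>V. d u < m} v v'" using v' Suc by (auto simp: ER_def insert_commute)
    ultimately show ?case by (meson converse_rtranclp_into_rtranclp)
  qed
  have UM: False if bl: "is_block V E B" and x: "x \<in> B" and y: "y \<in> B" and xy: "x \<noteq> y"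
    and mx: "\<forall>u\<in>B. d x \<le> d u" and my: "\<forall>u\<in>B. d y \<le> d u" for B x y
  proof -
    have BV: "B \<subseteq> V" using bl by (simp add: is_block_def)
    have dxy: "d x = d y" using mx my x y by (meson antisym)
    show False
    proof (cases "d x")
      case 0
      then show False using d0r x y BV dxy xy by (metis subsetD)
    next
      case (Suc k)
      obtain x1 where x1: "x1 \<in> V" "{x1,x} \<in> E" "d x1 = k" using dS[of x k] Suc x BV by blast
      obtain y1 where y1: "y1 \<in> V" "{y1,y} \<in> E" "d y1 = k" using dS[of y k] Suc dxy y BV by auto
      define A where "A = {u\<in>V. d u < d x}"
      have AB: "A \<inter> B = {}" using mx by (auto simp: A_def)
      have x1A: "x1 \<in> A" using x1 Suc by (simp add: A_def)
      have r1: "(ER E A)\<^sup>*\<^sup>* x1 r" using DW[of x1 "d x"] x1 Suc by (simp add: A_def)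
      have r2: "(ER E A)\<^sup>*\<^sup>* y1 r" using DW[of y1 "d x"] y1 Suc by (simp add: A_def)
      have r12: "(ER E A)\<^sup>*\<^sup>* x1 y1" using r1 ER_rtc_sym[OF r2] by (meson rtranclp_trans)
      have "{x,x1} \<in> E" using x1(2) by (simp add: insert_commute)
      from ear_block[OF bl x y xy AB _ x1A this r12 y1(2)] show False by (auto simp: A_def)
    qed
  qed
  define BB where "BB = {B. is_block V E B \<and> 3 \<le> card B}"
  have finBB: "finite BB"
  proof -
    have "BB \<subseteq> Pow V" by (auto simp: BB_def is_block_def)
    then show ?thesis using finV by (meson finite_Pow_iff finite_subset)
  qed
  have ex: "\<exists>x. x \<in> S \<inter> B \<and> (\<exists>u\<in>B. d u < d x)" if B: "B \<in> BB" for B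
  proof -
    have bl: "is_block V E B" and c3: "3 \<le> card B" using B by (auto simp: BB_def)
    obtain x1 x2 where xx: "x1 \<in> S \<inter> B" "x2 \<in> S \<inter> B" "x1 \<noteq> x2"
      using two_in_S[OF g conn bl c3 cfs] by blast
    obtain p where p: "p \<in> B" "\<forall>u. u \<in> B \<longrightarrow> d p \<le> d u"
      using ex_has_least_nat[of "\<lambda>u. u \<in> B" x1 d] xx by blast
    obtain x where x: "x \<in> S \<inter> B" "x \<noteq> p" using xx by blast
    have "d p < d x"
    proof (rule ccontr)
      assume "\<not> d p < d x"
      then have "\<forall>u\<in>B. d x \<le> d u" using p by (meson le_trans not_le)
      then show False using UM[OF bl _ p(1) x(2)] x(1) p(2) by blast
    qed
    then show ?thesis using x p by blast
  qed
  define f where "f B = (SOME x. x \<in> S \<inter> B \<and> (\<exists>u\<in>B. d u < d x))" for B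
  have fB: "f B \<in> S \<inter> B \<and> (\<exists>u\<in>B. d u < d (f B))" if "B \<in> BB" for B
    unfolding f_def using ex[OF that] by (rule someI_ex)
  have img: "f ` BB \<subseteq> S - {r}" using fB d0 by fastforce
  have inj: "inj_on f BB"
  proof
    fix B1 B2 assume B1: "B1 \<in> BB" and B2: "B2 \<in> BB" and eq: "f B1 = f B2"
    show "B1 = B2"
    proof (rule ccontr)
      assume ne: "B1 \<noteq> B2"
      define x where "x = f B1"
      have bl1: "is_block V E B1" and bl2: "is_block V E B2" and c32: "3 \<le> card B2"
        using B1 B2 by (auto simp: BB_def)
      have B1V: "B1 \<subseteq> V" and B2V: "B2 \<subseteq> V" using bl1 bl2 by (auto simp: is_block_def)
      obtain u1 where u1: "u1 \<in> B1" "d u1 < d x" "x \<in> B1" using fB[OF B1] by (auto simp: x_def)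
      obtain u2 where u2: "u2 \<in> B2" "d u2 < d x" "x \<in> B2" using fB[OF B2] eq by (auto simp: x_def)
      have inter: "\<And>y. y \<in> B1 \<Longrightarrow> y \<in> B2 \<Longrightarrow> y = x"
        using blocks_inter[OF bl1 bl2 ne] u1(3) u2(3) by metis
      define Z where "Z = {u\<in>V. d u < d x}"
      have ZV: "Z \<subseteq> V - {x}" by (auto simp: Z_def)
      have r1: "(ER E Z)\<^sup>*\<^sup>* u1 r" using DW[of u1 "d x"] u1 B1V by (auto simp: Z_def)
      have r2: "(ER E Z)\<^sup>*\<^sup>* u2 r" using DW[of u2 "d x"] u2 B2V by (auto simp: Z_def)
      have r12: "(ER E (V - {x}))\<^sup>*\<^sup>* u1 u2"
        using ER_mono[OF ZV] r1 ER_rtc_sym[OF r2] by (meson rtranclp_trans)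
      have nB2: "nonsep E B2" using bl2 by (simp add: is_block_def)
      obtain q where q: "q \<in> B2" "q \<noteq> x" "{x,q} \<in> E"
        using two_neighbors[OF g nB2 c32 u2(3)] by blast
      have u2x: "u2 \<noteq> x" using u2 by auto
      have "connected_on E (B2 - {x})" using nB2 u2 u2x unfolding nonsep_def by blast
      then have rq: "(ER E (B2 - {x}))\<^sup>*\<^sup>* u2 q" using u2 u2x q unfolding connected_on_ER by blast
      have sB: "B2 - {x} \<subseteq> V - {x}" using B2V by blast
      have "(ER E (V - {x}))\<^sup>*\<^sup>* u2 q" by (rule ER_mono[OF sB rq])
      then have r1q: "(ER E (V - {x}))\<^sup>*\<^sup>* u1 q" using r12 by (meson rtranclp_trans)
      have qB1: "q \<notin> B1" using inter q by blast
      from last_exit[OF r1q u1(1) qB1] obtain a w where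
        aw: "a \<in> B1" "a \<in> V - {x}" "w \<in> V - {x} - B1" "{a,w} \<in> E" "(ER E (V - {x} - B1))\<^sup>*\<^sup>* w q"
        by blast
      have sV: "V - {x} - B1 \<subseteq> V - B1" by blast
      have rr: "(ER E (V - B1))\<^sup>*\<^sup>* w q" by (rule ER_mono[OF sV aw(5)])
      have "{q,x} \<in> E" using q by (simp add: insert_commute)
      from ear_block[OF bl1 aw(1) u1(3) _ _ _ _ aw(4) rr this] aw(2,3) show False by blast
    qed
  qed
  have "card BB = card (f ` BB)" using inj by (simp add: card_image)
  also have "\<dots> \<le> card (S - {r})" using img finS by (simp add: card_mono)
  also have "\<dots> = card S - 1" using r finS by simp
  finally have "card BB \<le> card S - 1" .
  moreover have "card S \<ge> 1" using r finS by (metis One_nat_def Suc_leI card_gt_0_iff empty_iff)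
  ultimately show ?thesis by (simp add: b_def BB_def)
qed

lemma CF_finite: "finite V \<Longrightarrow> finite {S. connected_forcing_set V E S}"
proof -
  assume "finite V"
  moreover have "{S. connected_forcing_set V E S} \<subseteq> Pow V"
    by (auto simp: connected_forcing_set_def forcing_set_def)
  ultimately show ?thesis by (meson finite_Pow_iff finite_subset)
qed

lemma Fc_ge:
  assumes g: "graph V E" and conn: "connected_on E V"
  shows "b V E + 1 \<le> F_c V E"
proof -
  have finV: "finite V" using g by (simp add: graph_def)
  have "connected_forcing_set V E V"
    using conn by (auto simp: connected_forcing_set_def forcing_set_def intro: forced.init)
  then have ne: "card ` {S. connected_forcing_set V E S} \<noteq> {}" by blast
  have fin: "finite (card ` {S. connected_forcing_set V E S})" using CF_finite[OF finV] by simp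
  have "F_c V E \<in> card ` {S. connected_forcing_set V E S}" unfolding F_c_def using Min_in[OF fin ne] .
  then obtain S where "connected_forcing_set V E S" "F_c V E = card S" by blast
  then show ?thesis using main_bound[OF g conn] by simp
qed

definition adjk :: "nat \<Rightarrow> nat \<Rightarrow> nat \<Rightarrow> bool" where
  "adjk k u v \<longleftrightarrow> u < v \<and> v \<le> 2*k+1 \<and> (v = u+1 \<or> (v = u+2 \<and> even u))"

definition Wk :: "nat \<Rightarrow> nat set" where "Wk k = {0..2*k+1}"
definition Fk :: "nat \<Rightarrow> nat set set" where "Fk k = {{u,v} | u v. adjk k u v}"

lemma Fk_iff: "{x,y} \<in> Fk k \<longleftrightarrow> adjk k x y \<or> adjk k y x"
  unfolding Fk_def by (auto simp: doubleton_eq_iff)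

lemma graph_k: "graph (Wk k) (Fk k)"
proof -
  have "Fk k \<subseteq> {e. \<exists>u v. e = {u, v} \<and> u \<noteq> v \<and> u \<in> Wk k \<and> v \<in> Wk k}"
  proof
    fix e assume "e \<in> Fk k"
    then obtain u v where uv: "e = {u,v}" "adjk k u v" by (auto simp: Fk_def)
    then show "e \<in> {e. \<exists>u v. e = {u, v} \<and> u \<noteq> v \<and> u \<in> Wk k \<and> v \<in> Wk k}"
      by (intro CollectI exI[of _ u] exI[of _ v]) (auto simp: adjk_def Wk_def)
  qed
  moreover have "\<forall>v\<in>Wk k. \<exists>e\<in>Fk k. v \<in> e"
  proof
    fix v assume v: "v \<in> Wk k"
    show "\<exists>e\<in>Fk k. v \<in> e"
    proof (cases "v \<le> 2*k")
      case True
      then have "{v, v+1} \<in> Fk k" by (simp add: Fk_iff adjk_def)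
      then show ?thesis by blast
    next
      case False
      then have "v = 2*k+1" using v by (simp add: Wk_def)
      moreover have "{2*k, 2*k+1} \<in> Fk k" by (simp add: Fk_iff adjk_def)
      ultimately show ?thesis by blast
    qed
  qed
  ultimately show ?thesis by (simp add: graph_def Wk_def)
qed

lemma conn_k: "connected_on (Fk k) (Wk k)"
proof -
  have "v \<in> Wk k \<longrightarrow> (ER (Fk k) (Wk k))\<^sup>*\<^sup>* v 0" for v
  proof (induction v)
    case 0 then show ?case by simp
  next
    case (Suc n)
    show ?case
    proof
      assume h: "Suc n \<in> Wk k"
      then have "ER (Fk k) (Wk k) (Suc n) n" by (auto simp: ER_def Fk_iff adjk_def Wk_def)
      then show "(ER (Fk k) (Wk k))\<^sup>*\<^sup>* (Suc n) 0" using Suc h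
        by (auto simp: Wk_def intro: converse_rtranclp_into_rtranclp)
    qed
  qed
  then show ?thesis by (intro connected_root[of 0]) (auto simp: Wk_def)
qed

lemma complete_conn: "X \<noteq> {} \<Longrightarrow> \<forall>x\<in>X. \<forall>y\<in>X. x \<noteq> y \<longrightarrow> {x,y} \<in> E \<Longrightarrow> connected_on E X"
  unfolding connected_on_ER by (metis ER_step r_into_rtranclp rtranclp.rtrancl_refl)

lemma complete_nonsep: "X \<noteq> {} \<Longrightarrow> \<forall>x\<in>X. \<forall>y\<in>X. x \<noteq> y \<longrightarrow> {x,y} \<in> E \<Longrightarrow> nonsep E X"
  unfolding nonsep_def by (auto intro!: complete_conn)

lemma NC: "(ER E X)\<^sup>*\<^sup>* x y \<Longrightarrow> x \<in> U \<Longrightarrow> (\<forall>a b. a \<in> U \<longrightarrow> ER E X a b \<longrightarrow> b \<in> U) \<Longrightarrow> y \<in> U"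
  by (induction rule: rtranclp_induct) auto

definition Tri :: "nat \<Rightarrow> nat set" where "Tri i = {2*i, 2*i+1, 2*i+2}"

lemma tri_block:
  assumes ik: "i < k"
  shows "is_block (Wk k) (Fk k) (Tri i)"
proof -
  have sub: "Tri i \<subseteq> Wk k" using ik by (auto simp: Tri_def Wk_def)
  have ns: "nonsep (Fk k) (Tri i)"
    by (rule complete_nonsep) (use ik in \<open>auto simp: Tri_def Fk_iff adjk_def\<close>)
  have max: False if B': "Tri i \<subset> B'" "B' \<subseteq> Wk k" "nonsep (Fk k) B'" for B'
  proof -
    obtain w where w: "w \<in> B'" "w \<notin> Tri i" using B'(1) by blast
    have inB: "2*i \<in> B'" "2*i+1 \<in> B'" "2*i+2 \<in> B'" using B'(1) by (auto simp: Tri_def)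
    show False
    proof (cases "w > 2*i+2")
      case True
      have "B' - {2*i+2} \<noteq> {}" using inB by auto
      then have "connected_on (Fk k) (B' - {2*i+2})" using B'(3) inB unfolding nonsep_def by blast
      then have r: "(ER (Fk k) (B' - {2*i+2}))\<^sup>*\<^sup>* (2*i) w" using inB w True unfolding connected_on_ER by auto
      have inv: "\<forall>a bb. a \<in> {v. v \<le> 2*i+1} \<longrightarrow> ER (Fk k) (B' - {2*i+2}) a bb \<longrightarrow> bb \<in> {v. v \<le> 2*i+1}"
        by (auto simp: ER_def Fk_iff adjk_def; presburger)
      have "w \<in> {v. v \<le> 2*i+1}" using NC[OF r _ inv] by simp
      then show False using True by simp
    next
      case False
      then have wl: "w < 2*i" using w by (auto simp: Tri_def)
      have "B' - {2*i} \<noteq> {}" using inB by auto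
      then have "connected_on (Fk k) (B' - {2*i})" using B'(3) inB unfolding nonsep_def by blast
      then have r: "(ER (Fk k) (B' - {2*i}))\<^sup>*\<^sup>* (2*i+1) w" using inB w wl unfolding connected_on_ER by auto
      have inv: "\<forall>a bb. a \<in> {v. 2*i+1 \<le> v} \<longrightarrow> ER (Fk k) (B' - {2*i}) a bb \<longrightarrow> bb \<in> {v. 2*i+1 \<le> v}"
        by (auto simp: ER_def Fk_iff adjk_def; presburger)
      have "w \<in> {v. 2*i+1 \<le> v}" using NC[OF r _ inv] by simp
      then show False using wl by simp
    qed
  qed
  show ?thesis unfolding is_block_def using sub ns max by blast
qed

definition Sk :: "nat \<Rightarrow> nat set" where "Sk k = {v. even v \<and> v \<le> 2*k}"

lemma Sk_img: "Sk k = (\<lambda>j. 2*j) ` {..k}"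
  by (auto simp: Sk_def elim!: evenE)

lemma card_Sk: "card (Sk k) = k + 1"
  unfolding Sk_img by (subst card_image) (auto simp: inj_on_def)

lemma Sk_conn: "connected_on (Fk k) (Sk k)"
proof -
  have "j \<le> k \<longrightarrow> (ER (Fk k) (Sk k))\<^sup>*\<^sup>* (2*j) 0" for j
  proof (induction j)
    case 0 then show ?case by simp
  next
    case (Suc j)
    show ?case
    proof
      assume h: "Suc j \<le> k"
      have "ER (Fk k) (Sk k) (2 * Suc j) (2*j)" using h by (auto simp: ER_def Fk_iff adjk_def Sk_def)
      then show "(ER (Fk k) (Sk k))\<^sup>*\<^sup>* (2 * Suc j) 0" using Suc h
        by (auto intro: converse_rtranclp_into_rtranclp)
    qed
  qed
  then show ?thesis unfolding Sk_img by (intro connected_root[of 0]) auto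
qed

lemma Sk_odd: "i \<le> k \<longrightarrow> 2*i+1 \<in> forced (Fk k) (Sk k)"
proof (induction i)
  case 0
  show ?case
  proof
    assume "0 \<le> k"
    show "2*0+1 \<in> forced (Fk k) (Sk k)"
    proof (rule forced.force[where u=0])
      show "0 \<in> forced (Fk k) (Sk k)" by (rule forced.init) (simp add: Sk_def)
      show "{0, 2*0+1} \<in> Fk k" by (simp add: Fk_iff adjk_def)
      fix w assume "{0, w} \<in> Fk k" "w \<noteq> 2*0+1"
      then have "w \<in> Sk k" by (auto simp: Fk_iff adjk_def Sk_def)
      then show "w \<in> forced (Fk k) (Sk k)" by (rule forced.init)
    qed
  qed
next
  case (Suc i)
  show ?case
  proof
    assume h: "Suc i \<le> k"
    have IH: "2*i+1 \<in> forced (Fk k) (Sk k)" using Suc h by simp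
    show "2*Suc i+1 \<in> forced (Fk k) (Sk k)"
    proof (rule forced.force[where u="2*Suc i"])
      show "2*Suc i \<in> forced (Fk k) (Sk k)" by (rule forced.init) (use h in \<open>simp add: Sk_def\<close>)
      show "{2*Suc i, 2*Suc i+1} \<in> Fk k" using h by (simp add: Fk_iff adjk_def)
      fix w assume w: "{2*Suc i, w} \<in> Fk k" "w \<noteq> 2*Suc i+1"
      then have "w = 2*i+1 \<or> (even w \<and> w \<le> 2*k)" unfolding Fk_iff adjk_def by presburger
      then have "w = 2*i+1 \<or> w \<in> Sk k" by (auto simp: Sk_def)
      then show "w \<in> forced (Fk k) (Sk k)" using IH by (auto intro: forced.init)
    qed
  qed
qed

lemma Sk_cfs: "connected_forcing_set (Wk k) (Fk k) (Sk k)"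
proof -
  have "Sk k \<subseteq> Wk k" by (auto simp: Sk_def Wk_def)
  moreover have "Wk k \<subseteq> forced (Fk k) (Sk k)"
  proof
    fix v assume v: "v \<in> Wk k"
    show "v \<in> forced (Fk k) (Sk k)"
    proof (cases "even v")
      case True
      then have "v \<in> Sk k" using v by (auto simp: Sk_def Wk_def; presburger)
      then show ?thesis by (rule forced.init)
    next
      case False
      then obtain i where i: "v = 2*i+1" by (metis oddE)
      then have "i \<le> k" using v by (simp add: Wk_def)
      then show ?thesis using Sk_odd i by blast
    qed
  qed
  ultimately show ?thesis using Sk_conn by (simp add: connected_forcing_set_def forcing_set_def)
qed

lemma example:
  "graph (Wk k) (Fk k) \<and> connected_on (Fk k) (Wk k) \<and> b (Wk k) (Fk k) = k \<and> F_c (Wk k) (Fk k) = k + 1"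
proof -
  have finW: "finite (Wk k)" by (simp add: Wk_def)
  have up: "F_c (Wk k) (Fk k) \<le> k + 1"
  proof -
    have fin: "finite (card ` {S. connected_forcing_set (Wk k) (Fk k) S})" using CF_finite[OF finW] by simp
    have "F_c (Wk k) (Fk k) \<le> card (Sk k)" unfolding F_c_def
      using Min_le[OF fin] Sk_cfs by blast
    then show ?thesis by (simp add: card_Sk)
  qed
  have lo: "b (Wk k) (Fk k) + 1 \<le> F_c (Wk k) (Fk k)" using Fc_ge[OF graph_k conn_k] .
  have bk: "k \<le> b (Wk k) (Fk k)"
  proof -
    define BB where "BB = {B. is_block (Wk k) (Fk k) B \<and> 3 \<le> card B}"
    have finBB: "finite BB"
    proof -
      have "BB \<subseteq> Pow (Wk k)" by (auto simp: BB_def is_block_def)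
      then show ?thesis using finW by (meson finite_Pow_iff finite_subset)
    qed
    have "Tri ` {..<k} \<subseteq> BB" using tri_block by (auto simp: BB_def Tri_def)
    then have "card (Tri ` {..<k}) \<le> card BB" using finBB by (simp add: card_mono)
    moreover have "inj_on Tri {..<k}"
    proof
      fix i j assume "Tri i = Tri j"
      then have "2*i \<in> Tri j" "2*j \<in> Tri i" by (auto simp: Tri_def)
      then show "i = j" by (auto simp: Tri_def)
    qed
    ultimately show ?thesis by (simp add: card_image b_def BB_def)
  qed
  show ?thesis using graph_k conn_k up lo bk by simp
qed

theorem theorem5:
  fixes V :: "'a set" and E :: "'a set set"
  assumes "graph V E" and "connected_on E V"
  shows "F_c V E \<ge> b V E + 1
    \<and> (\<forall>k::nat. \<exists>(W::nat set) F. graph W F \<and> connected_on F W \<and> b W F = k \<and> F_c W F = k + 1)"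
  using Fc_ge[OF assms] example by blast

end
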